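(* For any $k$-atomic probability distributions $\Gamma,\Gamma'$ on $\mathbb R^d$, $$\sup_{\theta\in S^{d-1}}W_1(\Gamma_\theta,\Gamma'_\theta)\le W_1(\Gamma,\Gamma')\le k^2\sqrt d\,\sup_{\theta\in S^{d-1}}W_1(\Gamma_\theta,\Gamma'_\theta).$$
   Context: A $k$-atomic distribution is a probability distribution supported on at most $k$ points. For $\theta\in\mathbb R^d$, $\Gamma_\theta$ denotes the law of $\theta^\top U$ with $U\sim\Gamma$ (pushforward by $u\mapsto\theta^\top u$). $W_1(\Gamma,\Gamma')=\inf\mathbb E\|U-U'\|_2$ over couplings of $U\sim\Gamma$, $U'\sim\Gamma'$ (on $\mathbb R$ the norm is absolute value). $S^{d-1}$ is the unit sphere of $\mathbb R^d$. *)

theory Defs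
  imports "HOL-Probability.Probability"
begin

definition katomic :: "nat \<Rightarrow> 'a pmf \<Rightarrow> bool" where
  "katomic k p \<longleftrightarrow> finite (set_pmf p) \<and> card (set_pmf p) \<le> k"

definition couplings :: "'a pmf \<Rightarrow> 'b pmf \<Rightarrow> ('a \<times> 'b) pmf set" where
  "couplings p q = {r. map_pmf fst r = p \<and> map_pmf snd r = q}"

definition W1 :: "'a::real_normed_vector pmf \<Rightarrow> 'a pmf \<Rightarrow> real" where
  "W1 p q = (INF r \<in> couplings p q. measure_pmf.expectation r (\<lambda>(x, y). norm (x - y)))"

definition proj :: "'a::euclidean_space \<Rightarrow> 'a pmf \<Rightarrow> real pmf" where
  "proj \<theta> p = map_pmf (\<lambda>u. \<theta> \<bullet> u) p"

end

theory Submission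
  imports Defs
begin


definition cyl :: "'a::euclidean_space \<Rightarrow> real \<Rightarrow> real \<Rightarrow> real \<Rightarrow> 'a set" where
  "cyl u a h r = {c. a < c \<bullet> u \<and> c \<bullet> u \<le> a + h \<and> norm (c - (c \<bullet> u) *\<^sub>R u) \<le> r}"

lemma cyl_sets: "cyl u a h r \<in> sets lebesgue"
proof -
  have eq: "cyl u a h r = {c. u \<bullet> c > a} \<inter> {c. u \<bullet> c \<le> a+h} \<inter> {c. norm (c - (c \<bullet> u) *\<^sub>R u) \<le> r}"
    by (auto simp: cyl_def inner_commute)
  have "open {c. u \<bullet> c > a}" by (rule open_halfspace_gt)
  moreover have "closed {c. u \<bullet> c \<le> a+h}" by (rule closed_halfspace_le)
  moreover have "closed {c. norm (c - (c \<bullet> u) *\<^sub>R u) \<le> r}"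
    by (intro closed_Collect_le continuous_intros)
  ultimately show ?thesis unfolding eq
    by (intro sets.Int borel_open borel_closed) auto
qed

lemma proj_decomp:
  fixes u c :: "'a::euclidean_space"
  assumes "norm u = 1"
  shows "norm c ^ 2 = (c \<bullet> u)^2 + norm (c - (c \<bullet> u) *\<^sub>R u) ^ 2"
proof -
  have uu: "u \<bullet> u = 1" using assms by (simp add: power2_norm_eq_inner[symmetric])
  show ?thesis unfolding power2_norm_eq_inner
    by (simp add: inner_diff_left inner_diff_right uu inner_commute power2_eq_square algebra_simps)
qed

lemma cyl_bounded: "norm u = 1 \<Longrightarrow> bounded (cyl u a h r)"
proof -
  assume u: "norm u = 1"
  have "cyl u a h r \<subseteq> cball 0 (\<bar>a\<bar> + \<bar>h\<bar> + \<bar>r\<bar>)"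
  proof
    fix c assume c: "c \<in> cyl u a h r"
    have "norm c \<le> norm ((c \<bullet> u) *\<^sub>R u) + norm (c - (c \<bullet> u) *\<^sub>R u)"
      by (metis add.commute diff_add_cancel norm_triangle_ineq)
    also have "\<dots> \<le> (\<bar>a\<bar> + \<bar>h\<bar>) + \<bar>r\<bar>"
      using c u by (intro add_mono) (auto simp: cyl_def)
    finally show "c \<in> cball 0 (\<bar>a\<bar> + \<bar>h\<bar> + \<bar>r\<bar>)" by simp
  qed
  then show ?thesis using bounded_cball bounded_subset by blast
qed

lemma cyl_lmeas: "norm u = 1 \<Longrightarrow> cyl u a h r \<in> lmeasurable"
  by (intro bounded_set_imp_lmeasurable cyl_bounded cyl_sets)

lemma cyl_translate:
  assumes u: "norm u = 1"
  shows "(\<lambda>x. 1 *\<^sub>R x + a *\<^sub>R u) ` cyl u 0 h r = cyl u a h r"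
proof -
  have uu: "u \<bullet> u = 1" using u by (simp add: power2_norm_eq_inner[symmetric])
  have k: "(x + a *\<^sub>R u) \<bullet> u = x \<bullet> u + a" for x by (simp add: inner_add_left uu)
  have k2: "(x + a *\<^sub>R u) - ((x \<bullet> u + a) *\<^sub>R u) = x - (x \<bullet> u) *\<^sub>R u" for x
    by (simp add: algebra_simps)
  show ?thesis
  proof (intro set_eqI iffI)
    fix y assume "y \<in> (\<lambda>x. 1 *\<^sub>R x + a *\<^sub>R u) ` cyl u 0 h r"
    then obtain x where "x \<in> cyl u 0 h r" "y = x + a *\<^sub>R u" by auto
    then show "y \<in> cyl u a h r" by (auto simp: cyl_def k k2)
  next
    fix y assume y: "y \<in> cyl u a h r"
    have e1: "(y - a *\<^sub>R u) \<bullet> u = y \<bullet> u - a" by (simp add: inner_diff_left uu)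
    have e2: "y - a *\<^sub>R u - (y \<bullet> u - a) *\<^sub>R u = y - (y \<bullet> u) *\<^sub>R u" by (simp add: algebra_simps)
    have "y - a *\<^sub>R u \<in> cyl u 0 h r"
      using y unfolding cyl_def mem_Collect_eq e1 e2 by auto
    then show "y \<in> (\<lambda>x. 1 *\<^sub>R x + a *\<^sub>R u) ` cyl u 0 h r"
      by (intro image_eqI[of _ _ "y - a *\<^sub>R u"]) auto
  qed
qed

lemma cyl_scale:
  assumes u: "norm u = 1" and r: "r > 0"
  shows "(\<lambda>x. r *\<^sub>R x + 0) ` cyl u 0 h 1 = cyl u 0 (r*h) r"
proof -
  have k2: "r *\<^sub>R x - (r * (x \<bullet> u)) *\<^sub>R u = r *\<^sub>R (x - (x \<bullet> u) *\<^sub>R u)" for x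
    by (simp add: algebra_simps)
  show ?thesis
  proof (intro set_eqI iffI)
    fix y assume "y \<in> (\<lambda>x. r *\<^sub>R x + 0) ` cyl u 0 h 1"
    then obtain x where x: "x \<in> cyl u 0 h 1" "y = r *\<^sub>R x" by auto
    then show "y \<in> cyl u 0 (r*h) r" using r
      by (auto simp: cyl_def k2 mult_pos_pos mult_left_mono)
  next
    fix y assume y: "y \<in> cyl u 0 (r*h) r"
    define x where "x = (1/r) *\<^sub>R y"
    have yx: "y = r *\<^sub>R x" using r by (simp add: x_def)
    have "x \<in> cyl u 0 h 1"
      using y r unfolding yx by (auto simp: cyl_def k2 zero_less_mult_iff)
    then show "y \<in> (\<lambda>x. r *\<^sub>R x + 0) ` cyl u 0 h 1" using yx by auto
  qed
qed


lemma additive_mono_linear: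
  fixes \<phi> :: "real \<Rightarrow> real"
  assumes add: "\<And>a b. a \<ge> 0 \<Longrightarrow> b \<ge> 0 \<Longrightarrow> \<phi> (a+b) = \<phi> a + \<phi> b"
    and mono: "\<And>a b. 0 \<le> a \<Longrightarrow> a \<le> b \<Longrightarrow> \<phi> a \<le> \<phi> b"
    and h: "h \<ge> 0"
  shows "\<phi> h = h * \<phi> 1"
proof -
  have z: "\<phi> 0 = 0" using add[of 0 0] by simp
  have mult: "\<phi> (real m * x) = real m * \<phi> x" if "x \<ge> 0" for m x
  proof (induction m)
    case 0 then show ?case using z by simp
  next
    case (Suc m)
    have "\<phi> (real (Suc m) * x) = \<phi> (real m * x + x)" by (simp add: algebra_simps)
    also have "\<dots> = \<phi> (real m * x) + \<phi> x" using that by (intro add) auto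
    finally show ?case using Suc by (simp add: algebra_simps)
  qed
  define Z where "Z = \<phi> 1"
  have Z0: "Z \<ge> 0" using mono[of 0 1] z by (simp add: Z_def)
  have bound: "\<bar>\<phi> h - h * Z\<bar> \<le> Z / real m" if m: "m \<ge> 1" for m :: nat
  proof -
    have mpos: "real m > 0" using m by simp
    have one: "\<phi> (1 / real m) = Z / real m"
      using mult[of "1/real m" m] mpos by (simp add: Z_def field_simps)
    define q where "q = nat \<lfloor>real m * h\<rfloor>"
    have q1: "real q \<le> real m * h" using h mpos unfolding q_def by simp
    have q2: "real m * h < real q + 1" using h mpos unfolding q_def by simp
    have a1: "real q / real m \<le> h" using q1 mpos by (simp add: field_simps)
    have a2: "h \<le> (real q + 1) / real m" using q2 mpos by (simp add: field_simps)
    have f1: "\<phi> (real q / real m) = real q * Z / real m"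
      using mult[of "1/real m" q] mpos one by simp
    have f2: "\<phi> ((real q + 1) / real m) = (real q + 1) * Z / real m"
      using mult[of "1/real m" "q+1"] mpos one by (simp add: add.commute)
    have l: "real q * Z / real m \<le> \<phi> h" using mono[OF _ a1] f1 mpos by simp
    have u: "\<phi> h \<le> (real q + 1) * Z / real m" using mono[OF h a2] f2 by simp
    have l2: "real q * Z / real m \<le> h * Z" using mult_right_mono[OF a1 Z0] by simp
    have u2: "h * Z \<le> (real q + 1) * Z / real m" using mult_right_mono[OF a2 Z0] by simp
    have e: "(real q + 1) * Z / real m = real q * Z / real m + Z / real m" by (simp add: distrib_right add_divide_distrib)
    show ?thesis unfolding abs_le_iff using l u l2 u2 e by linarith
  qed
  show ?thesis
  proof (rule ccontr)
    assume ne: "\<phi> h \<noteq> h * \<phi> 1"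
    then have pos: "\<bar>\<phi> h - h * Z\<bar> > 0" by (simp add: Z_def)
    obtain m :: nat where m: "real m > Z / \<bar>\<phi> h - h * Z\<bar>" using reals_Archimedean2 by blast
    have "m \<ge> 1" using m Z0 pos
      by (metis divide_nonneg_pos less_one not_le of_nat_0 order.strict_trans1)
    then have "\<bar>\<phi> h - h * Z\<bar> \<le> Z / real m" by (rule bound)
    then have "\<bar>\<phi> h - h * Z\<bar> * real m \<le> Z" using \<open>m \<ge> 1\<close> by (simp add: field_simps)
    moreover have "Z < real m * \<bar>\<phi> h - h * Z\<bar>" using m pos by (simp add: field_simps)
    ultimately show False by (simp add: mult.commute)
  qed
qed


context
  fixes u :: "'a::euclidean_space"
  assumes u: "norm u = 1"
begin

lemma cyl_meas_translate: "measure lebesgue (cyl u a h r) = measure lebesgue (cyl u 0 h r)"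
  using measure_lebesgue_affine[of 1 "a *\<^sub>R u" "cyl u 0 h r"] cyl_translate[OF u, of a h r] by simp

lemma cyl_split:
  assumes "h1 \<ge> 0" "h2 \<ge> 0"
  shows "measure lebesgue (cyl u 0 (h1+h2) r) = measure lebesgue (cyl u 0 h1 r) + measure lebesgue (cyl u 0 h2 r)"
proof -
  have eq: "cyl u 0 (h1+h2) r = cyl u 0 h1 r \<union> cyl u h1 h2 r" using assms
    by (auto simp: cyl_def)
  have disj: "cyl u 0 h1 r \<inter> cyl u h1 h2 r = {}" by (auto simp: cyl_def)
  have "measure lebesgue (cyl u 0 h1 r \<union> cyl u h1 h2 r) = measure lebesgue (cyl u 0 h1 r) + measure lebesgue (cyl u h1 h2 r)"
    by (intro measure_Union fmeasurableD cyl_lmeas[OF u] disj)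
       (metis fmeasurableD2 cyl_lmeas u infinity_ennreal_def)+
  then show ?thesis using eq cyl_meas_translate[of h1 h2 r] by simp
qed

lemma cyl_mono:
  assumes "0 \<le> a" "a \<le> b"
  shows "measure lebesgue (cyl u 0 a r) \<le> measure lebesgue (cyl u 0 b r)"
  by (intro measure_mono_fmeasurable cyl_sets cyl_lmeas[OF u]) (use assms in \<open>auto simp: cyl_def\<close>)

definition "Zc = measure lebesgue (cyl u 0 1 1)"

lemma cyl_lin: "h \<ge> 0 \<Longrightarrow> measure lebesgue (cyl u 0 h 1) = h * Zc"
  unfolding Zc_def
  by (rule additive_mono_linear[where \<phi>="\<lambda>h. measure lebesgue (cyl u 0 h 1)"])
     (simp_all add: cyl_split cyl_mono)

lemma cyl_measure:
  assumes h: "h \<ge> 0" and r: "r > 0"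
  shows "measure lebesgue (cyl u a h r) = h * r ^ (DIM('a) - 1) * Zc"
proof -
  have "measure lebesgue (cyl u a h r) = measure lebesgue (cyl u 0 (r * (h/r)) r)"
    using r cyl_meas_translate by simp
  also have "\<dots> = measure lebesgue ((\<lambda>x. r *\<^sub>R x + 0) ` cyl u 0 (h/r) 1)"
    using cyl_scale[OF u r, of "h/r"] by simp
  also have "\<dots> = \<bar>r\<bar> ^ DIM('a) * measure lebesgue (cyl u 0 (h/r) 1)"
    by (rule measure_lebesgue_affine)
  also have "\<dots> = r ^ DIM('a) * ((h/r) * Zc)"
    using cyl_lin[of "h/r"] h r by simp
  also have "\<dots> = h * r ^ (DIM('a) - 1) * Zc"
  proof -
    have "r ^ DIM('a) = r ^ Suc (DIM('a) - 1)" by simp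
    also have "\<dots> = r * r ^ (DIM('a) - 1)" by (rule power_Suc)
    finally have "r ^ DIM('a) = r * r ^ (DIM('a) - 1)" .
    then show ?thesis using r by (simp add: field_simps)
  qed
  finally show ?thesis .
qed

lemma Zc_nonneg: "Zc \<ge> 0" by (simp add: Zc_def)

end


definition Ff :: "nat \<Rightarrow> real \<Rightarrow> real" where "Ff n s = sqrt (1 - s^2) ^ n"

lemma Ff_antimono: "0 \<le> a \<Longrightarrow> a \<le> b \<Longrightarrow> b \<le> 1 \<Longrightarrow> Ff n b \<le> Ff n a"
  unfolding Ff_def by (intro power_mono real_sqrt_le_mono) (auto intro: power_mono simp: power_le_one)

lemma Ff_cont: "isCont (Ff n) x"
  unfolding Ff_def by (intro continuous_intros)

lemma Ff_nonneg: "s \<le> 1 \<Longrightarrow> 0 \<le> s \<Longrightarrow> Ff n s \<ge> 0"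
  unfolding Ff_def by (simp add: power_le_one)

definition piece :: "'a::euclidean_space \<Rightarrow> real \<Rightarrow> real \<Rightarrow> 'a set" where
  "piece u h d = ball 0 1 \<inter> {c. h < c \<bullet> u \<and> c \<bullet> u \<le> h + d}"

definition gfun :: "'a::euclidean_space \<Rightarrow> real \<Rightarrow> real" where
  "gfun u h = measure lebesgue (ball 0 1 \<inter> {c. 0 < c \<bullet> u \<and> c \<bullet> u \<le> h})"

lemma piece_lmeas: "piece u h d \<in> lmeasurable"
proof -
  have eq: "piece u h d = ball 0 1 \<inter> {c. u \<bullet> c > h} \<inter> {c. u \<bullet> c \<le> h + d}"
    by (auto simp: piece_def inner_commute)
  have "piece u h d \<in> sets lebesgue" unfolding eq
    by (intro sets.Int borel_open borel_closed open_halfspace_gt closed_halfspace_le open_ball) auto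
  moreover have "bounded (piece u h d)" unfolding piece_def by (meson bounded_Int bounded_ball)
  ultimately show ?thesis by (intro bounded_set_imp_lmeasurable)
qed

lemma gfun_piece: "gfun u h = measure lebesgue (piece u 0 h)"
  by (simp add: gfun_def piece_def)

context
  fixes u :: "'a::euclidean_space"
  assumes u: "norm u = 1"
begin

lemma g_split:
  assumes "0 \<le> h" "0 \<le> d"
  shows "gfun u (h + d) = gfun u h + measure lebesgue (piece u h d)"
proof -
  have eq: "piece u 0 (h + d) = piece u 0 h \<union> piece u h d" using assms
    by (auto simp: piece_def)
  have disj: "piece u 0 h \<inter> piece u h d = {}" by (auto simp: piece_def)
  have "measure lebesgue (piece u 0 h \<union> piece u h d) = measure lebesgue (piece u 0 h) + measure lebesgue (piece u h d)"
    by (intro measure_Union fmeasurableD piece_lmeas disj)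
       (metis fmeasurableD2 piece_lmeas infinity_ennreal_def)+
  then show ?thesis using eq by (simp add: gfun_piece)
qed

lemma piece_upper:
  assumes h: "0 \<le> h" "h < 1" and d: "0 \<le> d"
  shows "measure lebesgue (piece u h d) \<le> d * Ff (DIM('a) - 1) h * Zc u"
proof -
  have sub: "piece u h d \<subseteq> cyl u h d (sqrt (1 - h^2))"
  proof
    fix c assume c: "c \<in> piece u h d"
    then have nc: "norm c < 1" and hc: "h < c \<bullet> u" "c \<bullet> u \<le> h + d" by (auto simp: piece_def)
    have "h^2 \<le> (c \<bullet> u)^2" using h hc by (intro power_mono) auto
    moreover have "norm c ^ 2 < 1" using nc by (simp add: power_less_one_iff)
    ultimately have "norm (c - (c \<bullet> u) *\<^sub>R u) ^ 2 \<le> 1 - h^2" using proj_decomp[OF u, of c] by linarith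
    then have "norm (c - (c \<bullet> u) *\<^sub>R u) \<le> sqrt (1 - h^2)" by (rule real_le_rsqrt)
    then show "c \<in> cyl u h d (sqrt (1 - h^2))" using hc by (simp add: cyl_def)
  qed
  have r: "sqrt (1 - h^2) > 0" using h by (simp add: power_less_one_iff)
  have "measure lebesgue (piece u h d) \<le> measure lebesgue (cyl u h d (sqrt (1 - h^2)))"
    by (intro measure_mono_fmeasurable sub fmeasurableD piece_lmeas cyl_lmeas u)
  also have "\<dots> = d * Ff (DIM('a) - 1) h * Zc u"
    using cyl_measure[OF u d r] by (simp add: Ff_def)
  finally show ?thesis .
qed

lemma piece_lower:
  assumes h: "0 \<le> h" and d: "0 < d" and hd: "h + 2*d < 1"
  shows "d * Ff (DIM('a) - 1) (h + 2*d) * Zc u \<le> measure lebesgue (piece u h d)"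
proof -
  define \<rho> where "\<rho> = sqrt (1 - (h + 2*d)^2)"
  have r: "\<rho> > 0" using h d hd unfolding \<rho>_def by (simp add: power_less_one_iff)
  have r2: "\<rho>^2 = 1 - (h + 2*d)^2" using h d hd unfolding \<rho>_def
    by (simp add: power_le_one)
  have sub: "cyl u h d \<rho> \<subseteq> piece u h d"
  proof
    fix c assume c: "c \<in> cyl u h d \<rho>"
    then have hc: "h < c \<bullet> u" "c \<bullet> u \<le> h + d" and nr: "norm (c - (c \<bullet> u) *\<^sub>R u) \<le> \<rho>"
      by (auto simp: cyl_def)
    have "(c \<bullet> u)^2 \<le> (h + d)^2" using h hc by (intro power_mono) auto
    moreover have "norm (c - (c \<bullet> u) *\<^sub>R u)^2 \<le> \<rho>^2" using nr by (intro power_mono) auto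
    moreover have "(h + d)^2 < (h + 2*d)^2" using h d by (intro power_strict_mono) auto
    ultimately have "norm c ^ 2 < 1" using proj_decomp[OF u, of c] r2 by linarith
    then have "norm c < 1" by (simp add: power_less_one_iff)
    then show "c \<in> piece u h d" using hc by (simp add: piece_def)
  qed
  have "d * Ff (DIM('a) - 1) (h + 2*d) * Zc u = measure lebesgue (cyl u h d \<rho>)"
    using cyl_measure[OF u _ r, of d h] d by (simp add: Ff_def \<rho>_def)
  also have "\<dots> \<le> measure lebesgue (piece u h d)"
    by (intro measure_mono_fmeasurable sub fmeasurableD piece_lmeas cyl_lmeas u)
  finally show ?thesis .
qed

end


context
  fixes u :: "'a::euclidean_space"
  assumes u: "norm u = 1"
begin

lemma gfun_0: "gfun u 0 = 0"
proof -
  have "ball 0 1 \<inter> {c. 0 < c \<bullet> u \<and> c \<bullet> u \<le> 0} = {}" by auto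
  then show ?thesis unfolding gfun_def by simp
qed

lemma g_quot_bounds:
  assumes h: "0 < h" "h < 1" and D: "D \<noteq> 0" "\<bar>D\<bar> < h" "\<bar>D\<bar> < (1 - h) / 3"
  shows "Zc u * Ff (DIM('a) - 1) (h + 2*\<bar>D\<bar>) \<le> (gfun u (h + D) - gfun u h) / D
       \<and> (gfun u (h + D) - gfun u h) / D \<le> Zc u * Ff (DIM('a) - 1) (h - \<bar>D\<bar>)"
proof (cases "D > 0")
  case True
  define m where "m = measure lebesgue (piece u h D)"
  have q: "(gfun u (h + D) - gfun u h) / D = m / D"
    using g_split[OF u, of h D] h True by (simp add: m_def)
  have lo: "D * Ff (DIM('a) - 1) (h + 2*D) * Zc u \<le> m"
    unfolding m_def using piece_lower[OF u, of h D] h True D by simp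
  have up: "m \<le> D * Ff (DIM('a) - 1) h * Zc u"
    unfolding m_def using piece_upper[OF u, of h D] h True by simp
  have mono: "Ff (DIM('a) - 1) h \<le> Ff (DIM('a) - 1) (h - D)"
    using h D True by (intro Ff_antimono) auto
  have up2: "m \<le> D * (Zc u * Ff (DIM('a) - 1) (h - D))"
    using up mult_left_mono[OF mono Zc_nonneg[OF u]] True
    by (smt (verit) mult.assoc mult.commute mult_left_mono)
  show ?thesis using lo up2 True unfolding q
    by (simp add: pos_le_divide_eq pos_divide_le_eq mult.commute mult.left_commute)
next
  case False
  then have Dn: "D < 0" using D by simp
  define e where "e = - D"
  have e: "0 < e" "e < h" "e < (1 - h)/3" using Dn D unfolding e_def by auto
  define m where "m = measure lebesgue (piece u (h - e) e)"
  have gs: "gfun u h = gfun u (h - e) + m"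
    using g_split[OF u, of "h - e" e] e by (simp add: m_def)
  have q: "(gfun u (h + D) - gfun u h) / D = m / e"
    using gs unfolding e_def by (simp add: divide_simps)
  have lo: "e * Ff (DIM('a) - 1) (h - e + 2*e) * Zc u \<le> m"
    unfolding m_def using piece_lower[OF u, of "h - e" e] e by simp
  have mono: "Ff (DIM('a) - 1) (h + 2*e) \<le> Ff (DIM('a) - 1) (h + e)"
    using h e by (intro Ff_antimono) auto
  have lo2: "e * (Zc u * Ff (DIM('a) - 1) (h + 2*e)) \<le> m"
    using lo mult_left_mono[OF mono Zc_nonneg[OF u]] e
    by (smt (verit) mult.assoc mult.commute mult_left_mono)
  have up: "m \<le> e * Ff (DIM('a) - 1) (h - e) * Zc u"
    unfolding m_def using piece_upper[OF u, of "h - e" e] e h by simp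
  have ae: "\<bar>D\<bar> = e" unfolding e_def using Dn by simp
  show ?thesis using lo2 up e unfolding q ae
    by (simp add: pos_le_divide_eq pos_divide_le_eq mult.commute mult.left_commute)
qed

lemma g_deriv:
  assumes h: "0 < h" "h < 1"
  shows "(gfun u has_real_derivative Zc u * Ff (DIM('a) - 1) h) (at h)"
  unfolding DERIV_def
proof (rule tendsto_sandwich)
  define \<delta> where "\<delta> = min h ((1 - h) / 3)"
  have \<delta>: "\<delta> > 0" using h by (simp add: \<delta>_def)
  have ev: "eventually (\<lambda>D. D \<noteq> 0 \<and> \<bar>D\<bar> < h \<and> \<bar>D\<bar> < (1 - h) / 3) (at (0::real))"
    unfolding eventually_at using \<delta> by (intro exI[of _ \<delta>]) (auto simp: \<delta>_def)
  show "eventually (\<lambda>D. Zc u * Ff (DIM('a) - 1) (h + 2*\<bar>D\<bar>) \<le> (gfun u (h + D) - gfun u h) / D) (at 0)"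
    using ev by eventually_elim (use g_quot_bounds h in blast)
  show "eventually (\<lambda>D. (gfun u (h + D) - gfun u h) / D \<le> Zc u * Ff (DIM('a) - 1) (h - \<bar>D\<bar>)) (at 0)"
    using ev by eventually_elim (use g_quot_bounds h in blast)
  have l1: "((\<lambda>D. h + 2*\<bar>D\<bar>) \<longlongrightarrow> h) (at (0::real))"
  proof -
    have "((\<lambda>D. h + 2*\<bar>D\<bar>) \<longlongrightarrow> h + 2*\<bar>0\<bar>) (at (0::real))"
      by (intro tendsto_intros)
    then show ?thesis by simp
  qed
  have l2: "((\<lambda>D. h - \<bar>D\<bar>) \<longlongrightarrow> h) (at (0::real))"
  proof -
    have "((\<lambda>D. h - \<bar>D\<bar>) \<longlongrightarrow> h - \<bar>0\<bar>) (at (0::real))"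
      by (intro tendsto_intros)
    then show ?thesis by simp
  qed
  show "((\<lambda>D. Zc u * Ff (DIM('a) - 1) (h + 2*\<bar>D\<bar>)) \<longlongrightarrow> Zc u * Ff (DIM('a) - 1) h) (at 0)"
    by (intro tendsto_mult_left isCont_tendsto_compose[OF Ff_cont l1])
  show "((\<lambda>D. Zc u * Ff (DIM('a) - 1) (h - \<bar>D\<bar>)) \<longlongrightarrow> Zc u * Ff (DIM('a) - 1) h) (at 0)"
    by (intro tendsto_mult_left isCont_tendsto_compose[OF Ff_cont l2])
qed

lemma g_cont:
  assumes X: "0 < X" "X < 1"
  shows "continuous_on {0..X} (gfun u)"
  unfolding continuous_on_eq_continuous_within
proof
  fix x assume x: "x \<in> {0..X}"
  show "continuous (at x within {0..X}) (gfun u)"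
  proof (cases "x = 0")
    case False
    then have "0 < x" "x < 1" using x X by auto
    from DERIV_isCont[OF g_deriv[OF this]] show ?thesis
      by (rule continuous_at_imp_continuous_within)
  next
    case True
    have bnd: "0 \<le> gfun u y \<and> gfun u y \<le> y * Zc u" if y: "y \<in> {0..X}" for y
    proof -
      have "gfun u y = measure lebesgue (piece u 0 y)"
        using g_split[OF u, of 0 y] y gfun_0 by simp
      also have "\<dots> \<le> y * Ff (DIM('a) - 1) 0 * Zc u"
        using piece_upper[OF u, of 0 y] y by simp
      finally show ?thesis by (simp add: Ff_def gfun_def)
    qed
    have "((gfun u) \<longlongrightarrow> 0) (at 0 within {0..X})"
    proof (rule tendsto_sandwich[of "\<lambda>_. 0" _ _ "\<lambda>y. y * Zc u"])
      show "eventually (\<lambda>y. 0 \<le> gfun u y) (at 0 within {0..X})"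
        using bnd by (auto simp: eventually_at_filter)
      show "eventually (\<lambda>y. gfun u y \<le> y * Zc u) (at 0 within {0..X})"
        using bnd by (auto simp: eventually_at_filter)
      show "((\<lambda>y. y * Zc u) \<longlongrightarrow> 0) (at 0 within {0..X})"
        by (auto intro!: tendsto_eq_intros)
    qed auto
    then show ?thesis using True gfun_0 by (simp add: continuous_within)
  qed
qed

lemma g_lower:
  assumes X: "0 < X" "X < 1"
    and P: "\<And>s. (P has_real_derivative p s) (at s)" and P0: "P 0 = 0"
    and pF: "\<And>s. 0 < s \<Longrightarrow> s < X \<Longrightarrow> p s \<le> Ff (DIM('a) - 1) s"
  shows "Zc u * P X \<le> gfun u X"
proof -
  define G where "G s = gfun u s - Zc u * P s" for s
  have "G 0 \<le> G X"
  proof (rule DERIV_nonneg_imp_increasing_open[where f=G and a=0 and b=X])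
    show "0 \<le> X" using X by simp
    fix s assume s: "0 < s" "s < X"
    have d1: "(gfun u has_real_derivative Zc u * Ff (DIM('a) - 1) s) (at s)"
      by (rule g_deriv) (use s X in auto)
    have "(G has_real_derivative Zc u * Ff (DIM('a) - 1) s - Zc u * p s) (at s)"
      unfolding G_def by (rule DERIV_diff[OF d1 DERIV_cmult[OF P]])
    moreover have "Zc u * Ff (DIM('a) - 1) s - Zc u * p s \<ge> 0"
      using mult_left_mono[OF pF[OF s] Zc_nonneg[OF u]] by simp
    ultimately show "\<exists>y. (G has_real_derivative y) (at s) \<and> 0 \<le> y" by blast
  next
    have "continuous_on {0..X} P"
      using P by (meson DERIV_isCont continuous_at_imp_continuous_on)
    then show "continuous_on {0..X} G"
      unfolding G_def using g_cont[OF X] by (intro continuous_intros)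
  qed
  then show ?thesis unfolding G_def using gfun_0 P0 by simp
qed

end


lemma bern_real:
  fixes a y :: real
  assumes a: "a \<ge> 1" and y: "0 \<le> y" "y < 1"
  shows "1 - a * y \<le> (1 - y) powr a"
proof -
  define f where "f x = (1 - x) powr a - (1 - a * x)" for x :: real
  have "f 0 \<le> f y"
  proof (rule DERIV_nonneg_imp_nondecreasing[where f=f])
    show "0 \<le> y" using y by simp
    fix x assume x: "0 \<le> x" "x \<le> y"
    then have x1: "1 - x > 0" using y by simp
    have "(f has_real_derivative (a * (1 - x) powr (a - 1) * (-1) - (- a))) (at x)"
      unfolding f_def using x1 by (auto intro!: derivative_eq_intros)
    moreover have "(1 - x) powr (a - 1) \<le> 1"
      using x1 x a by (intro powr_le1) auto
    then have "a * (1 - x) powr (a - 1) * (-1) - (- a) \<ge> 0" using a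
      by (simp add: mult_left_le_one_le)
    ultimately show "\<exists>d. (f has_real_derivative d) (at x) \<and> 0 \<le> d" by blast
  qed
  then show ?thesis unfolding f_def by simp
qed


lemma sqrt_helper:
  fixes q m :: real
  assumes "0 < q" "0 \<le> m" "1 < q^2 * m"
  shows "1 < q * sqrt m"
proof -
  have "q * sqrt m = sqrt (q^2 * m)" using assms by (simp add: real_sqrt_mult)
  moreover have "1 < sqrt (q^2 * m)" using assms(3) by (simp add: real_less_rsqrt)
  ultimately show ?thesis by simp
qed

lemma poly_exists:
  assumes n: "n \<ge> 1"
  shows "\<exists>X P p. 0 < X \<and> X < 1 \<and> (\<forall>s. (P has_real_derivative p s) (at s)) \<and> P 0 = 0
     \<and> (\<forall>s. 0 < s \<longrightarrow> s < X \<longrightarrow> p s \<le> Ff n s) \<and> 1 < P X * sqrt (real n + 1)"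
proof -
  consider "n = 1" | "n = 2" | "n = 3 \<or> n = 4" | "n \<ge> 5" using n by linarith
  then show ?thesis
  proof cases
    case 1
    define P where "P s = s - s^3/6 - s^5/10" for s :: real
    define p where "p s = 1 - s^2/2 - s^4/2" for s :: real
    have D: "\<forall>s. (P has_real_derivative p s) (at s)"
      unfolding P_def p_def by (auto intro!: derivative_eq_intros)
    have B: "\<forall>s. 0 < s \<longrightarrow> s < 99/100 \<longrightarrow> p s \<le> Ff n s"
    proof (intro allI impI)
      fix s :: real assume s: "0 < s" "s < 99/100"
      define y where "y = s^2"
      have y: "0 \<le> y" "y \<le> 1" unfolding y_def using s by (auto simp: power_le_one)
      have e: "p s = 1 - y/2 - y^2/2" unfolding p_def y_def by (simp add: power_mult[symmetric])
      have "(1 - y/2 - y^2/2)^2 \<le> 1 - y"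
      proof -
        have "(1 - y/2 - y^2/2)^2 = (1 - y) * ((1 - y) * (2 + y)^2 / 4)"
          by (simp add: power2_eq_square algebra_simps)
        moreover have A: "(1 - y) * (2 + y)^2 / 4 \<le> 1"
        proof -
          have "(1 - y) * (2 + y)^2 = 4 - 3*y^2 - y^3" by (simp add: power2_eq_square power3_eq_cube algebra_simps)
          moreover have "3*y^2 + y^3 \<ge> 0" using y by simp
          ultimately show ?thesis by simp
        qed
        moreover have "(1 - y) * ((1 - y) * (2 + y)^2 / 4) \<le> 1 - y"
          by (rule mult_left_le[OF A]) (use y in simp)
        ultimately show ?thesis by simp
      qed
      then have "1 - y/2 - y^2/2 \<le> sqrt (1 - y)" by (rule real_le_rsqrt)
      then show "p s \<le> Ff n s" using e 1 by (simp add: Ff_def y_def)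
    qed
    have V: "1 < P (99/100) * sqrt (real n + 1)"
      using 1 by (intro sqrt_helper) (auto simp: P_def eval_nat_numeral)
    show ?thesis
      by (rule exI[of _ "99/100"], rule exI[of _ P], rule exI[of _ p]) (use D B V in \<open>auto simp: P_def\<close>)
  next
    case 2
    define P where "P s = s - s^3/3" for s :: real
    define p where "p s = 1 - s^2" for s :: real
    have D: "\<forall>s. (P has_real_derivative p s) (at s)"
      unfolding P_def p_def by (auto intro!: derivative_eq_intros)
    have B: "\<forall>s. 0 < s \<longrightarrow> s < 9/10 \<longrightarrow> p s \<le> Ff n s"
    proof (intro allI impI)
      fix s :: real assume s: "0 < s" "s < 9/10"
      have "s^2 \<le> 1" using s by (auto simp: power_le_one)
      then show "p s \<le> Ff n s" using 2 by (simp add: Ff_def p_def)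
    qed
    have V: "1 < P (9/10) * sqrt (real n + 1)"
      using 2 by (intro sqrt_helper) (auto simp: P_def eval_nat_numeral)
    show ?thesis
      by (rule exI[of _ "9/10"], rule exI[of _ P], rule exI[of _ p]) (use D B V in \<open>auto simp: P_def\<close>)
  next
    case 3
    define P where "P s = s - (2/3) * s^3 + s^5/5" for s :: real
    define p where "p s = (1 - s^2)^2" for s :: real
    have D: "\<forall>s. (P has_real_derivative p s) (at s)"
      unfolding P_def p_def by (auto intro!: derivative_eq_intros simp: power2_eq_square algebra_simps eval_nat_numeral)
    have B: "\<forall>s. 0 < s \<longrightarrow> s < 9/10 \<longrightarrow> p s \<le> Ff n s"
    proof (intro allI impI)
      fix s :: real assume s: "0 < s" "s < 9/10"
      have s2: "s^2 \<le> 1" using s by (auto simp: power_le_one)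
      have "sqrt (1 - s^2) ^ 4 \<le> sqrt (1 - s^2) ^ n"
        using 3 s2 by (intro power_decreasing) auto
      moreover have "sqrt (1 - s^2) ^ 4 = (1 - s^2)^2"
      proof -
        have "sqrt (1 - s^2) ^ 4 = (sqrt (1 - s^2) ^ 2)^2"
          by (metis num_double numeral_times_numeral power_mult)
        also have "sqrt (1 - s^2) ^ 2 = 1 - s^2" using s2 by simp
        finally show ?thesis .
      qed
      ultimately show "p s \<le> Ff n s" by (simp add: Ff_def p_def)
    qed
    have V: "1 < P (9/10) * sqrt (real n + 1)"
      using 3 by (intro sqrt_helper) (auto simp: P_def eval_nat_numeral)
    show ?thesis
      by (rule exI[of _ "9/10"], rule exI[of _ P], rule exI[of _ p]) (use D B V in \<open>auto simp: P_def\<close>)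
  next
    case 4
    define a where "a = real n / 4"
    have a: "a \<ge> 5/4" using 4 unfolding a_def by simp
    define X where "X = 2 / sqrt (real n)"
    have Xpos: "X > 0" using 4 by (simp add: X_def)
    have X2: "X^2 = 1 / a" using 4 by (simp add: X_def a_def power_divide)
    have X1: "X < 1"
    proof -
      have "X^2 < 1^2" using X2 a by simp
      then show ?thesis using Xpos by (smt (verit) power_mono)
    qed
    define P where "P s = s - (2/3) * a * s ^ 3 + (1/5) * a ^ 2 * s ^ 5" for s :: real
    define p where "p s = (1 - a * s ^ 2) ^ 2" for s :: real
    have D: "\<forall>s. (P has_real_derivative p s) (at s)"
      unfolding P_def p_def by (auto intro!: derivative_eq_intros simp: power2_eq_square algebra_simps eval_nat_numeral)
    have B: "\<forall>s. 0 < s \<longrightarrow> s < X \<longrightarrow> p s \<le> Ff n s"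
    proof (intro allI impI)
      fix s :: real assume s: "0 < s" "s < X"
      define y where "y = s^2"
      have ys: "y < X^2" unfolding y_def using s by (intro power_strict_mono) auto
      have y0: "0 \<le> y" unfolding y_def by simp
      have ay: "a * y \<le> 1" using ys X2 a by (simp add: field_simps)
      have "5/4 * y \<le> a * y" using a y0 by (intro mult_right_mono) auto
      then have y1: "y < 1" using ay by linarith
      have bern: "1 - a * y \<le> (1 - y) powr a" using bern_real[of a y] a y0 y1 by simp
      have sq: "(1 - a*y)^2 \<le> ((1 - y) powr a)^2"
        using bern ay by (intro power_mono) auto
      have "((1 - y) powr a)^2 = (1 - y) powr (2*a)"
        using y1 by (simp add: powr_powr[symmetric] powr_realpow[symmetric] powr_mult_base power2_eq_square powr_add[symmetric])
      also have "\<dots> = (1 - y) powr (real n / 2)" by (simp add: a_def)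
      also have "\<dots> = ((1 - y) powr (1/2)) ^ n"
        using y1 by (simp add: powr_realpow[symmetric] powr_powr)
      also have "\<dots> = sqrt (1 - y) ^ n" using y1 by (simp add: powr_half_sqrt)
      finally show "p s \<le> Ff n s" using sq by (simp add: Ff_def p_def y_def)
    qed
    have PX: "P X = 8 * X / 15"
    proof -
      have "P X = X * (1 - 2*a*X^2/3 + a^2*(X^2)^2/5)"
        unfolding P_def by (simp add: power2_eq_square power3_eq_cube algebra_simps eval_nat_numeral)
      also have "\<dots> = 8 * X / 15" using X2 a by (simp add: field_simps power2_eq_square)
      finally show ?thesis .
    qed
    have V: "1 < P X * sqrt (real n + 1)"
    proof (rule sqrt_helper)
      show "0 < P X" using PX Xpos by simp
      show "0 \<le> real n + 1" by simp
      have "(P X)^2 * (real n + 1) = 256 * (real n + 1) / (225 * real n)"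
        using 4 unfolding PX by (simp add: X_def power_divide field_simps)
      also have "\<dots> > 1" using 4 by (simp add: field_simps)
      finally show "1 < (P X)^2 * (real n + 1)" .
    qed
    show ?thesis
      by (rule exI[of _ X], rule exI[of _ P], rule exI[of _ p]) (use D B V Xpos X1 in \<open>auto simp: P_def\<close>)
  qed
qed


lemma ball_meas_pos: "r > 0 \<Longrightarrow> measure lebesgue (ball (x::'a::euclidean_space) r) > 0"
proof -
  assume r: "r > 0"
  have "measure lebesgue (ball x r) = measure lborel (ball x r)"
    by (simp add: measure_completion)
  then show ?thesis using content_ball_pos[OF r] by simp
qed

context
  fixes u :: "'a::euclidean_space"
  assumes u: "norm u = 1"
begin

lemma Zc_pos: "Zc u > 0"
proof -
  have sub: "ball ((1/2) *\<^sub>R u) (1/4) \<subseteq> cyl u 0 1 1"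
  proof
    fix c assume c: "c \<in> ball ((1/2) *\<^sub>R u) (1/4)"
    define w where "w = c - (1/2) *\<^sub>R u"
    have nw: "norm w < 1/4" using c by (simp add: w_def dist_norm norm_minus_commute)
    have uu: "u \<bullet> u = 1" using u by (simp add: power2_norm_eq_inner[symmetric])
    have cu: "c \<bullet> u = 1/2 + w \<bullet> u" by (simp add: w_def inner_diff_left uu)
    have "\<bar>w \<bullet> u\<bar> \<le> norm w * norm u" by (rule Cauchy_Schwarz_ineq2)
    then have wu: "\<bar>w \<bullet> u\<bar> < 1/4" using nw u by simp
    have cw: "c = w + (1/2) *\<^sub>R u" by (simp add: w_def)
    have perp: "c - (c \<bullet> u) *\<^sub>R u = w - (w \<bullet> u) *\<^sub>R u"
      unfolding cu by (subst cw) (simp add: scaleR_add_left algebra_simps)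
    have "norm (w - (w \<bullet> u) *\<^sub>R u)^2 \<le> norm w ^ 2"
      using proj_decomp[OF u, of w] by simp
    then have "norm (w - (w \<bullet> u) *\<^sub>R u) \<le> norm w" by (simp add: power2_le_iff_abs_le)
    then have n1: "norm (c - (c \<bullet> u) *\<^sub>R u) \<le> 1" using nw perp by simp
    have c1: "0 < c \<bullet> u" "c \<bullet> u \<le> 0 + 1" using cu wu by linarith+
    show "c \<in> cyl u 0 1 1" unfolding cyl_def using n1 c1 by blast
  qed
  have "0 < measure lebesgue (ball ((1/2) *\<^sub>R u) (1/4))" by (rule ball_meas_pos) simp
  also have "\<dots> \<le> Zc u" unfolding Zc_def[OF u]
    by (intro measure_mono_fmeasurable sub fmeasurableD lmeasurable_ball cyl_lmeas u)
  finally show ?thesis .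
qed

lemma refl_half:
  "measure lebesgue (ball 0 1 \<inter> {c. - X \<le> c \<bullet> u \<and> c \<bullet> u < 0}) = gfun u X"
proof -
  have "(\<lambda>x. (-1) *\<^sub>R x + 0) ` (ball 0 1 \<inter> {c. 0 < c \<bullet> u \<and> c \<bullet> u \<le> X})
        = ball 0 1 \<inter> {c. - X \<le> c \<bullet> u \<and> c \<bullet> u < 0}"
  proof (intro set_eqI iffI)
    fix y assume "y \<in> (\<lambda>x. (-1) *\<^sub>R x + 0) ` (ball 0 1 \<inter> {c. 0 < c \<bullet> u \<and> c \<bullet> u \<le> X})"
    then show "y \<in> ball 0 1 \<inter> {c. - X \<le> c \<bullet> u \<and> c \<bullet> u < 0}" by auto
  next
    fix y assume y: "y \<in> ball 0 1 \<inter> {c. - X \<le> c \<bullet> u \<and> c \<bullet> u < 0}"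
    then have "-y \<in> ball 0 1 \<inter> {c. 0 < c \<bullet> u \<and> c \<bullet> u \<le> X}" by auto
    then show "y \<in> (\<lambda>x. (-1) *\<^sub>R x + 0) ` (ball 0 1 \<inter> {c. 0 < c \<bullet> u \<and> c \<bullet> u \<le> X})"
      by (intro image_eqI[of _ _ "-y"]) auto
  qed
  moreover have "measure lebesgue ((\<lambda>x. (-1) *\<^sub>R x + 0) ` (ball 0 1 \<inter> {c. 0 < c \<bullet> u \<and> c \<bullet> u \<le> X}))
     = \<bar>-1\<bar> ^ DIM('a) * measure lebesgue (ball 0 1 \<inter> {c. 0 < c \<bullet> u \<and> c \<bullet> u \<le> X})"
    by (rule measure_lebesgue_affine)
  ultimately show ?thesis by (simp add: gfun_def)
qed

lemma half_lmeas: "ball 0 1 \<inter> {c. - X \<le> c \<bullet> u \<and> c \<bullet> u < 0} \<in> lmeasurable"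
proof -
  have eq: "ball 0 1 \<inter> {c. - X \<le> c \<bullet> u \<and> c \<bullet> u < 0} = ball 0 1 \<inter> {c. u \<bullet> c \<ge> -X} \<inter> {c. u \<bullet> c < 0}"
    by (auto simp: inner_commute)
  have "ball 0 1 \<inter> {c. - X \<le> c \<bullet> u \<and> c \<bullet> u < 0} \<in> sets lebesgue" unfolding eq
    by (intro sets.Int borel_open borel_closed open_halfspace_lt closed_halfspace_ge open_ball) auto
  moreover have "bounded (ball (0::'a) 1 \<inter> {c. - X \<le> c \<bullet> u \<and> c \<bullet> u < 0})" by (meson bounded_Int bounded_ball)
  ultimately show ?thesis by (intro bounded_set_imp_lmeasurable)
qed

lemma slab_bound:
  assumes d: "DIM('a) \<ge> 2" and e: "\<epsilon> > 0"
  shows "measure lebesgue (ball 0 1 \<inter> {c. \<bar>c \<bullet> u\<bar> < \<epsilon>}) < \<epsilon> * sqrt (DIM('a)) * measure lebesgue (ball (0::'a) 1)"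
proof -
  have n1: "DIM('a) - 1 \<ge> 1" using d by simp
  obtain X P p where X: "0 < X" "X < 1" and D: "\<forall>s. (P has_real_derivative p s) (at s)"
    and P0: "P 0 = 0" and B: "\<forall>s. 0 < s \<longrightarrow> s < X \<longrightarrow> p s \<le> Ff (DIM('a) - 1) s"
    and V: "1 < P X * sqrt (real (DIM('a) - 1) + 1)"
    using poly_exists[OF n1] by blast
  have sd: "real (DIM('a) - 1) + 1 = real DIM('a)" using d by simp
  have gX: "Zc u * P X \<le> gfun u X"
    by (rule g_lower[OF u X]) (use D P0 B in auto)
  define A where "A = ball (0::'a) 1 \<inter> {c. 0 < c \<bullet> u \<and> c \<bullet> u \<le> X}"
  define A' where "A' = ball (0::'a) 1 \<inter> {c. - X \<le> c \<bullet> u \<and> c \<bullet> u < 0}"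
  have Al: "A \<in> lmeasurable" using piece_lmeas[of u 0 X] by (simp add: A_def piece_def)
  have A'l: "A' \<in> lmeasurable" using half_lmeas by (simp add: A'_def)
  have "measure lebesgue (A \<union> A') = measure lebesgue A + measure lebesgue A'"
  proof (rule measure_Union)
    show "emeasure lebesgue A \<noteq> \<infinity>" by (metis fmeasurableD2 Al infinity_ennreal_def)
    show "emeasure lebesgue A' \<noteq> \<infinity>" by (metis fmeasurableD2 A'l infinity_ennreal_def)
    show "A \<in> sets lebesgue" "A' \<in> sets lebesgue" using Al A'l by (auto intro: fmeasurableD)
    show "A \<inter> A' = {}" by (auto simp: A_def A'_def)
  qed
  also have "\<dots> = 2 * gfun u X"
    using refl_half[of X] by (simp add: A_def A'_def gfun_def)
  finally have uA: "measure lebesgue (A \<union> A') = 2 * gfun u X" .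
  have "measure lebesgue (A \<union> A') \<le> measure lebesgue (ball (0::'a) 1)"
    by (intro measure_mono_fmeasurable fmeasurableD lmeasurable_ball sets.Un Al A'l)
       (auto simp: A_def A'_def)
  then have ballb: "2 * gfun u X \<le> measure lebesgue (ball (0::'a) 1)" using uA by simp
  have sub: "ball 0 1 \<inter> {c. \<bar>c \<bullet> u\<bar> < \<epsilon>} \<subseteq> cyl u (-\<epsilon>) (2*\<epsilon>) 1"
  proof
    fix c :: 'a assume c: "c \<in> ball 0 1 \<inter> {c. \<bar>c \<bullet> u\<bar> < \<epsilon>}"
    have "norm (c - (c \<bullet> u) *\<^sub>R u)^2 \<le> norm c ^ 2" using proj_decomp[OF u, of c] by simp
    then have "norm (c - (c \<bullet> u) *\<^sub>R u) \<le> norm c" by (simp add: power2_le_iff_abs_le)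
    then show "c \<in> cyl u (-\<epsilon>) (2*\<epsilon>) 1" using c by (auto simp: cyl_def)
  qed
  have slab_l: "ball 0 1 \<inter> {c. \<bar>c \<bullet> u\<bar> < \<epsilon>} \<in> sets lebesgue"
  proof -
    have eq: "ball 0 1 \<inter> {c. \<bar>c \<bullet> u\<bar> < \<epsilon>} = ball 0 1 \<inter> {c. u \<bullet> c < \<epsilon>} \<inter> {c. u \<bullet> c > -\<epsilon>}"
      by (auto simp: inner_commute)
    show ?thesis unfolding eq
      by (intro sets.Int borel_open open_halfspace_lt open_halfspace_gt open_ball) auto
  qed
  have "measure lebesgue (ball 0 1 \<inter> {c. \<bar>c \<bullet> u\<bar> < \<epsilon>}) \<le> measure lebesgue (cyl u (-\<epsilon>) (2*\<epsilon>) 1)"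
    by (intro measure_mono_fmeasurable sub slab_l fmeasurableD cyl_lmeas u)
  also have "\<dots> = 2 * \<epsilon> * Zc u" using cyl_measure[OF u, of "2*\<epsilon>" 1 "-\<epsilon>"] e by simp
  also have "\<dots> < 2 * \<epsilon> * Zc u * (P X * sqrt (DIM('a)))"
    using V sd Zc_pos e by simp
  also have "\<dots> = \<epsilon> * sqrt (DIM('a)) * (2 * (Zc u * P X))" by (simp add: algebra_simps)
  also have "\<dots> \<le> \<epsilon> * sqrt (DIM('a)) * measure lebesgue (ball (0::'a) 1)"
    using gX ballb e by (intro mult_left_mono) auto
  finally show ?thesis .
qed

end


lemma dim1_inner:
  assumes "DIM('a::euclidean_space) = 1"
  shows "\<bar>(x::'a) \<bullet> y\<bar> = norm x * norm y"
proof -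
  obtain b where B: "Basis = {b::'a}" using assms by (metis card_1_singletonE)
  have b: "b \<in> Basis" by (metis B singletonI)
  have x: "x = (x \<bullet> b) *\<^sub>R b" using euclidean_representation[of x] unfolding B by simp
  have y: "y = (y \<bullet> b) *\<^sub>R b" using euclidean_representation[of y] unfolding B by simp
  have nb: "norm b = 1" "b \<bullet> b = 1" using b by auto
  have "x \<bullet> y = (x \<bullet> b) * (y \<bullet> b)"
    by (subst x, subst y) (simp add: nb)
  moreover have "norm x = \<bar>x \<bullet> b\<bar>" by (subst x) (simp add: nb)
  moreover have "norm y = \<bar>y \<bullet> b\<bar>" by (subst y) (simp add: nb)
  ultimately show ?thesis by (simp add: abs_mult)
qed

lemma dir_exists_ge2:
  fixes U W :: "'a::euclidean_space set"
  assumes d: "DIM('a) \<ge> 2" and fU: "finite U" and fW: "finite W"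
    and Uu: "\<forall>u\<in>U. norm u = 1" and W0: "0 \<notin> W"
    and N: "card U \<le> N" "N \<ge> 1"
    and ne: "U \<noteq> {} \<or> W \<noteq> {}"
  shows "\<exists>c. norm c = 1 \<and> (\<forall>u\<in>U. \<bar>c \<bullet> u\<bar> \<ge> 1 / (real N * sqrt (DIM('a))))
            \<and> (\<forall>w\<in>W. c \<bullet> w \<noteq> 0)"
proof -
  define \<epsilon> where "\<epsilon> = 1 / (real N * sqrt (DIM('a)))"
  have \<epsilon>: "\<epsilon> > 0" using N by (simp add: \<epsilon>_def)
  define S where "S u = ball (0::'a) 1 \<inter> {c. \<bar>c \<bullet> u\<bar> < \<epsilon>}" for u
  define H where "H = ball (0::'a) 1 \<inter> (\<Union>w\<in>W. {c. w \<bullet> c = 0})"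
  have Sl: "S u \<in> sets lebesgue" for u
  proof -
    have eq: "S u = ball 0 1 \<inter> {c. u \<bullet> c < \<epsilon>} \<inter> {c. u \<bullet> c > -\<epsilon>}"
      by (auto simp: S_def inner_commute)
    show ?thesis unfolding eq
      by (intro sets.Int borel_open open_halfspace_lt open_halfspace_gt open_ball) auto
  qed
  have Hneg: "negligible H"
  proof -
    have "negligible (\<Union>w\<in>W. {c. w \<bullet> c = 0})"
      using fW W0 by (intro negligible_Union) (auto intro: negligible_hyperplane)
    then show ?thesis unfolding H_def by (rule negligible_subset) auto
  qed
  have Hnull: "H \<in> null_sets lebesgue" using Hneg by (simp add: negligible_iff_null_sets)
  have "\<not> ball (0::'a) 1 \<subseteq> (\<Union>u\<in>U. S u) \<union> H"
  proof
    assume sub: "ball (0::'a) 1 \<subseteq> (\<Union>u\<in>U. S u) \<union> H"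
    have SUl: "(\<Union>u\<in>U. S u) \<in> sets lebesgue" using fU Sl by auto
    have T: "(\<Union>u\<in>U. S u) \<union> H \<in> lmeasurable"
    proof (rule bounded_set_imp_lmeasurable)
      show "bounded ((\<Union>u\<in>U. S u) \<union> H)"
        by (rule bounded_subset[OF bounded_ball[of 0 1]]) (auto simp: S_def H_def)
      show "(\<Union>u\<in>U. S u) \<union> H \<in> sets lebesgue"
        using SUl Hnull by auto
    qed
    have "measure lebesgue (ball (0::'a) 1) \<le> measure lebesgue ((\<Union>u\<in>U. S u) \<union> H)"
      by (intro measure_mono_fmeasurable sub T) auto
    also have "\<dots> = measure lebesgue (\<Union>u\<in>U. S u)"
      by (rule measure_Un_null_set[OF SUl Hnull])
    also have "\<dots> \<le> (\<Sum>u\<in>U. measure lebesgue (S u))"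
      by (rule measure_UNION_le[OF fU Sl])
    finally have le: "measure lebesgue (ball (0::'a) 1) \<le> (\<Sum>u\<in>U. measure lebesgue (S u))" .
    have bp: "measure lebesgue (ball (0::'a) 1) > 0" by (rule ball_meas_pos) simp
    show False
    proof (cases "U = {}")
      case True
      then have "(\<Sum>u\<in>U. measure lebesgue (S u)) = 0" by simp
      then show False using le bp by linarith
    next
      case False
      have "(\<Sum>u\<in>U. measure lebesgue (S u)) < (\<Sum>u\<in>U. \<epsilon> * sqrt (DIM('a)) * measure lebesgue (ball (0::'a) 1))"
      proof (rule sum_strict_mono[OF fU False])
        fix u assume "u \<in> U"
        then show "measure lebesgue (S u) < \<epsilon> * sqrt (DIM('a)) * measure lebesgue (ball (0::'a) 1)"
          unfolding S_def using Uu d \<epsilon> by (intro slab_bound) auto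
      qed
      also have "\<dots> = real (card U) * \<epsilon> * sqrt (DIM('a)) * measure lebesgue (ball (0::'a) 1)"
        by simp
      also have "\<dots> \<le> real N * \<epsilon> * sqrt (DIM('a)) * measure lebesgue (ball (0::'a) 1)"
        using N \<epsilon> bp by (intro mult_right_mono) auto
      also have "\<dots> = measure lebesgue (ball (0::'a) 1)"
        using N by (simp add: \<epsilon>_def)
      finally show False using le by simp
    qed
  qed
  then obtain c where c: "c \<in> ball (0::'a) 1" "c \<notin> (\<Union>u\<in>U. S u)" "c \<notin> H" by blast
  have cU: "\<bar>c \<bullet> u\<bar> \<ge> \<epsilon>" if "u \<in> U" for u using c that by (auto simp: S_def)
  have cW: "c \<bullet> w \<noteq> 0" if "w \<in> W" for w using c that by (auto simp: H_def inner_commute)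
  have c0: "c \<noteq> 0"
  proof
    assume "c = 0"
    then show False using ne cU cW \<epsilon> by fastforce
  qed
  have nc: "norm c > 0" "norm c < 1" using c c0 by auto
  define \<theta> where "\<theta> = (1 / norm c) *\<^sub>R c"
  have "norm \<theta> = 1" using nc by (simp add: \<theta>_def)
  moreover have "\<forall>u\<in>U. \<bar>\<theta> \<bullet> u\<bar> \<ge> \<epsilon>"
  proof
    fix u assume u: "u \<in> U"
    have "\<bar>\<theta> \<bullet> u\<bar> = \<bar>c \<bullet> u\<bar> / norm c" using nc by (simp add: \<theta>_def abs_mult)
    also have "\<dots> \<ge> \<bar>c \<bullet> u\<bar>"
    proof -
      have "\<bar>c \<bullet> u\<bar> * norm c \<le> \<bar>c \<bullet> u\<bar>" using nc by (intro mult_left_le) auto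
      then show ?thesis using nc by (simp add: le_divide_eq)
    qed
    finally show "\<bar>\<theta> \<bullet> u\<bar> \<ge> \<epsilon>" using cU[OF u] by simp
  qed
  moreover have "\<forall>w\<in>W. \<theta> \<bullet> w \<noteq> 0" using cW nc by (simp add: \<theta>_def)
  ultimately show ?thesis unfolding \<epsilon>_def by blast
qed

lemma dir_exists:
  fixes U W :: "'a::euclidean_space set"
  assumes fU: "finite U" and fW: "finite W"
    and Uu: "\<forall>u\<in>U. norm u = 1" and W0: "0 \<notin> W"
    and N: "card U \<le> N" "N \<ge> 1"
  shows "\<exists>c. norm c = 1 \<and> (\<forall>u\<in>U. \<bar>c \<bullet> u\<bar> \<ge> 1 / (real N * sqrt (DIM('a))))
            \<and> (\<forall>w\<in>W. c \<bullet> w \<noteq> 0)"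
proof (cases "DIM('a) \<ge> 2 \<and> (U \<noteq> {} \<or> W \<noteq> {})")
  case True
  then show ?thesis using dir_exists_ge2[OF _ fU fW Uu W0 N] by blast
next
  case False
  obtain b :: 'a where b: "b \<in> Basis" using nonempty_Basis by blast
  show ?thesis
  proof (cases "U = {} \<and> W = {}")
    case True
    then show ?thesis using b by (intro exI[of _ b]) auto
  next
    case F2: False
    then have D1: "DIM('a) = 1" using False DIM_positive[where 'a='a] by linarith
    have "\<bar>b \<bullet> u\<bar> \<ge> 1 / (real N * sqrt (DIM('a)))" if "u \<in> U" for u
    proof -
      have "\<bar>b \<bullet> u\<bar> = 1" using dim1_inner[OF D1, of b u] Uu that b by simp
      moreover have "1 / (real N * sqrt (DIM('a))) \<le> 1" using N D1 by simp
      ultimately show ?thesis by simp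
    qed
    moreover have "b \<bullet> w \<noteq> 0" if "w \<in> W" for w
      using dim1_inner[OF D1, of b w] W0 that b by auto
    ultimately show ?thesis using b by (intro exI[of _ b]) auto
  qed
qed


lemma pair_in_couplings: "pair_pmf p q \<in> couplings p q"
  by (simp add: couplings_def map_fst_pair_pmf map_snd_pair_pmf)

lemma couplings_ne: "couplings p q \<noteq> {}"
  using pair_in_couplings by blast

lemma coupling_support:
  assumes "r \<in> couplings p q"
  shows "set_pmf r \<subseteq> set_pmf p \<times> set_pmf q"
proof
  fix z assume z: "z \<in> set_pmf r"
  have p: "p = map_pmf fst r" "q = map_pmf snd r" using assms by (auto simp: couplings_def)
  show "z \<in> set_pmf p \<times> set_pmf q"
    unfolding p mem_Times_iff set_map_pmf using z by blast
qed

lemma coupling_finite: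
  assumes "r \<in> couplings p q" "finite (set_pmf p)" "finite (set_pmf q)"
  shows "finite (set_pmf r)"
  using coupling_support[OF assms(1)] assms(2,3) by (meson finite_SigmaI finite_subset)

lemma cost_nonneg: "0 \<le> measure_pmf.expectation r (\<lambda>(x, y). norm (x - y))"
  by (rule Bochner_Integration.integral_nonneg) (auto split: prod.splits)

lemma cost_bdd: "bdd_below ((\<lambda>r. measure_pmf.expectation r (\<lambda>(x, y). norm (x - y))) ` couplings p q)"
  using cost_nonneg by (intro bdd_belowI[of _ 0]) auto

lemma W1_le:
  assumes "r \<in> couplings p q"
  shows "W1 p q \<le> measure_pmf.expectation r (\<lambda>(x, y). norm (x - y))"
  unfolding W1_def by (rule cINF_lower[OF cost_bdd assms])

lemma W1_proj_le:
  fixes \<Gamma> \<Gamma>' :: "'a::euclidean_space pmf"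
  assumes f: "finite (set_pmf \<Gamma>)" "finite (set_pmf \<Gamma>')" and th: "norm \<theta> = 1"
  shows "W1 (proj \<theta> \<Gamma>) (proj \<theta> \<Gamma>') \<le> W1 \<Gamma> \<Gamma>'"
  unfolding W1_def[of \<Gamma>]
proof (rule cINF_greatest[OF couplings_ne])
  fix r assume r: "r \<in> couplings \<Gamma> \<Gamma>'"
  define r' where "r' = map_pmf (\<lambda>(x, y). (\<theta> \<bullet> x, \<theta> \<bullet> y)) r"
  have "map_pmf fst r' = map_pmf (\<lambda>x. \<theta> \<bullet> x) (map_pmf fst r)"
    unfolding r'_def by (simp add: pmf.map_comp o_def case_prod_beta)
  moreover have "map_pmf snd r' = map_pmf (\<lambda>x. \<theta> \<bullet> x) (map_pmf snd r)"
    unfolding r'_def by (simp add: pmf.map_comp o_def case_prod_beta)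
  ultimately have r'c: "r' \<in> couplings (proj \<theta> \<Gamma>) (proj \<theta> \<Gamma>')"
    using r by (simp add: couplings_def proj_def)
  have "W1 (proj \<theta> \<Gamma>) (proj \<theta> \<Gamma>') \<le> measure_pmf.expectation r' (\<lambda>(x, y). norm (x - y))"
    by (rule W1_le[OF r'c])
  also have "\<dots> = measure_pmf.expectation r (\<lambda>z. \<bar>\<theta> \<bullet> fst z - \<theta> \<bullet> snd z\<bar>)"
    unfolding r'_def by (simp add: case_prod_beta)
  also have "\<dots> \<le> measure_pmf.expectation r (\<lambda>(x, y). norm (x - y))"
  proof (rule integral_mono)
    have fr: "finite (set_pmf r)" by (rule coupling_finite[OF r f])
    show "integrable (measure_pmf r) (\<lambda>z. \<bar>\<theta> \<bullet> fst z - \<theta> \<bullet> snd z\<bar>)"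
      by (rule integrable_measure_pmf_finite[OF fr])
    show "integrable (measure_pmf r) (\<lambda>(x, y). norm (x - y))"
      by (rule integrable_measure_pmf_finite[OF fr])
    fix z :: "'a \<times> 'a"
    have "\<bar>\<theta> \<bullet> (fst z - snd z)\<bar> \<le> norm \<theta> * norm (fst z - snd z)" by (rule Cauchy_Schwarz_ineq2)
    then show "\<bar>\<theta> \<bullet> fst z - \<theta> \<bullet> snd z\<bar> \<le> (\<lambda>(x, y). norm (x - y)) z"
      using th by (cases z) (simp add: inner_diff_right)
  qed
  finally show "W1 (proj \<theta> \<Gamma>) (proj \<theta> \<Gamma>') \<le> measure_pmf.expectation r (\<lambda>(x, y). norm (x - y))" .
qed

lemma W1_lift:
  fixes \<Gamma> \<Gamma>' :: "'a::euclidean_space pmf"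
  assumes f: "finite (set_pmf \<Gamma>)" "finite (set_pmf \<Gamma>')" and t: "t > 0"
    and inj1: "inj_on (\<lambda>x. \<theta> \<bullet> x) (set_pmf \<Gamma>)" and inj2: "inj_on (\<lambda>x. \<theta> \<bullet> x) (set_pmf \<Gamma>')"
    and sep: "\<And>x y. x \<in> set_pmf \<Gamma> \<Longrightarrow> y \<in> set_pmf \<Gamma>' \<Longrightarrow> t * norm (x - y) \<le> \<bar>\<theta> \<bullet> (x - y)\<bar>"
  shows "t * W1 \<Gamma> \<Gamma>' \<le> W1 (proj \<theta> \<Gamma>) (proj \<theta> \<Gamma>')"
  unfolding W1_def[of "proj \<theta> \<Gamma>"]
proof (rule cINF_greatest[OF couplings_ne])
  fix r assume r: "r \<in> couplings (proj \<theta> \<Gamma>) (proj \<theta> \<Gamma>')"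
  define gi where "gi = the_inv_into (set_pmf \<Gamma>) (\<lambda>x. \<theta> \<bullet> x)"
  define hi where "hi = the_inv_into (set_pmf \<Gamma>') (\<lambda>x. \<theta> \<bullet> x)"
  define R where "R = map_pmf (\<lambda>(a, b). (gi a, hi b)) r"
  have rf: "map_pmf fst r = map_pmf (\<lambda>x. \<theta> \<bullet> x) \<Gamma>" and rs: "map_pmf snd r = map_pmf (\<lambda>x. \<theta> \<bullet> x) \<Gamma>'"
    using r by (auto simp: couplings_def proj_def)
  have "map_pmf fst R = map_pmf gi (map_pmf fst r)"
    unfolding R_def by (simp add: pmf.map_comp o_def case_prod_beta)
  also have "\<dots> = map_pmf (\<lambda>x. gi (\<theta> \<bullet> x)) \<Gamma>" unfolding rf by (simp add: pmf.map_comp o_def)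
  also have "\<dots> = map_pmf (\<lambda>x. x) \<Gamma>"
    by (rule map_pmf_cong) (auto simp: gi_def the_inv_into_f_f[OF inj1])
  finally have R1: "map_pmf fst R = \<Gamma>" by simp
  have "map_pmf snd R = map_pmf hi (map_pmf snd r)"
    unfolding R_def by (simp add: pmf.map_comp o_def case_prod_beta)
  also have "\<dots> = map_pmf (\<lambda>x. hi (\<theta> \<bullet> x)) \<Gamma>'" unfolding rs by (simp add: pmf.map_comp o_def)
  also have "\<dots> = map_pmf (\<lambda>x. x) \<Gamma>'"
    by (rule map_pmf_cong) (auto simp: hi_def the_inv_into_f_f[OF inj2])
  finally have R2: "map_pmf snd R = \<Gamma>'" by simp
  have Rc: "R \<in> couplings \<Gamma> \<Gamma>'" using R1 R2 by (simp add: couplings_def)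
  have fp1: "finite (set_pmf (proj \<theta> \<Gamma>))" using f by (simp add: proj_def)
  have fp2: "finite (set_pmf (proj \<theta> \<Gamma>'))" using f by (simp add: proj_def)
  have fr: "finite (set_pmf r)" by (rule coupling_finite[OF r fp1 fp2])
  have "t * W1 \<Gamma> \<Gamma>' \<le> t * measure_pmf.expectation R (\<lambda>(x, y). norm (x - y))"
    using W1_le[OF Rc] t by simp
  also have "\<dots> = measure_pmf.expectation r (\<lambda>z. t * norm (gi (fst z) - hi (snd z)))"
    unfolding R_def by (simp add: case_prod_beta)
  also have "\<dots> \<le> measure_pmf.expectation r (\<lambda>(x, y). norm (x - y))"
  proof (rule integral_mono_AE)
    show "integrable (measure_pmf r) (\<lambda>z. t * norm (gi (fst z) - hi (snd z)))"
      by (rule integrable_measure_pmf_finite[OF fr])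
    show "integrable (measure_pmf r) (\<lambda>(x, y). norm (x - y))"
      by (rule integrable_measure_pmf_finite[OF fr])
    show "AE z in measure_pmf r. t * norm (gi (fst z) - hi (snd z)) \<le> (\<lambda>(x, y). norm (x - y)) z"
    proof (rule AE_pmfI)
      fix z assume z: "z \<in> set_pmf r"
      have a: "fst z \<in> (\<lambda>x. \<theta> \<bullet> x) ` set_pmf \<Gamma>"
        using coupling_support[OF r] z by (auto simp: proj_def)
      have b: "snd z \<in> (\<lambda>x. \<theta> \<bullet> x) ` set_pmf \<Gamma>'"
        using coupling_support[OF r] z by (auto simp: proj_def)
      have ga: "gi (fst z) \<in> set_pmf \<Gamma>" "\<theta> \<bullet> gi (fst z) = fst z"
        using the_inv_into_into[OF inj1 a, of "set_pmf \<Gamma>"] f_the_inv_into_f[OF inj1 a]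
        by (auto simp: gi_def)
      have hb: "hi (snd z) \<in> set_pmf \<Gamma>'" "\<theta> \<bullet> hi (snd z) = snd z"
        using the_inv_into_into[OF inj2 b, of "set_pmf \<Gamma>'"] f_the_inv_into_f[OF inj2 b]
        by (auto simp: hi_def)
      have "t * norm (gi (fst z) - hi (snd z)) \<le> \<bar>\<theta> \<bullet> (gi (fst z) - hi (snd z))\<bar>"
        by (rule sep[OF ga(1) hb(1)])
      also have "\<dots> = \<bar>fst z - snd z\<bar>" using ga hb by (simp add: inner_diff_right)
      finally show "t * norm (gi (fst z) - hi (snd z)) \<le> (\<lambda>(x, y). norm (x - y)) z"
        by (cases z) simp
    qed
  qed
  finally show "t * W1 \<Gamma> \<Gamma>' \<le> measure_pmf.expectation r (\<lambda>(x, y). norm (x - y))" .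
qed


theorem mainTheorem3:
  fixes \<Gamma> \<Gamma>' :: "'a::euclidean_space pmf" and k :: nat
  assumes "katomic k \<Gamma>" and "katomic k \<Gamma>'"
  shows "(SUP \<theta>\<in>sphere 0 1. W1 (proj \<theta> \<Gamma>) (proj \<theta> \<Gamma>')) \<le> W1 \<Gamma> \<Gamma>'
       \<and> W1 \<Gamma> \<Gamma>' \<le> (real k)^2 * sqrt (real DIM('a)) * (SUP \<theta>\<in>sphere 0 1. W1 (proj \<theta> \<Gamma>) (proj \<theta> \<Gamma>'))"
proof -
  define S where "S = set_pmf \<Gamma>"
  define S' where "S' = set_pmf \<Gamma>'"
  have fS: "finite S" "card S \<le> k" using assms(1) by (auto simp: katomic_def S_def)
  have fS': "finite S'" "card S' \<le> k" using assms(2) by (auto simp: katomic_def S'_def)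
  have "S \<noteq> {}" by (simp add: S_def set_pmf_not_empty)
  then have k1: "k \<ge> 1" using fS by (metis card_0_eq less_one not_le order.trans)
  define D where "D = (SUP \<theta>\<in>sphere 0 1. W1 (proj \<theta> \<Gamma>) (proj \<theta> \<Gamma>'))"
  obtain b :: 'a where b: "b \<in> Basis" using nonempty_Basis by blast
  have sne: "sphere (0::'a) 1 \<noteq> {}" using b by (auto intro!: exI[of _ b])
  have projle: "W1 (proj \<theta> \<Gamma>) (proj \<theta> \<Gamma>') \<le> W1 \<Gamma> \<Gamma>'" if "\<theta> \<in> sphere 0 1" for \<theta>
    using that fS(1) fS'(1) unfolding S_def S'_def by (intro W1_proj_le) auto
  have bdd: "bdd_above ((\<lambda>\<theta>. W1 (proj \<theta> \<Gamma>) (proj \<theta> \<Gamma>')) ` sphere 0 1)"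
    using projle by (intro bdd_aboveI[of _ "W1 \<Gamma> \<Gamma>'"]) auto
  have first: "D \<le> W1 \<Gamma> \<Gamma>'" unfolding D_def by (rule cSUP_least[OF sne projle])
  define P where "P = {z \<in> S \<times> S'. fst z \<noteq> snd z}"
  define U where "U = (\<lambda>z. (1 / norm (fst z - snd z)) *\<^sub>R (fst z - snd z)) ` P"
  define W where "W = (\<lambda>z. fst z - snd z) ` ({z \<in> S \<times> S. fst z \<noteq> snd z} \<union> {z \<in> S' \<times> S'. fst z \<noteq> snd z})"
  have fP: "finite P" using fS fS' by (simp add: P_def)
  have fU: "finite U" using fP by (simp add: U_def)
  have fW: "finite W" using fS fS' by (simp add: W_def)
  have Uu: "\<forall>u\<in>U. norm u = 1" by (auto simp: U_def P_def)
  have W0: "0 \<notin> W" by (auto simp: W_def)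
  have cU: "card U \<le> k^2"
  proof -
    have "card U \<le> card P" unfolding U_def by (rule card_image_le[OF fP])
    also have "\<dots> \<le> card (S \<times> S')" using fS fS' by (intro card_mono) (auto simp: P_def)
    also have "\<dots> = card S * card S'" by (rule card_cartesian_product)
    also have "\<dots> \<le> k * k" using fS fS' by (intro mult_le_mono) auto
    finally show ?thesis by (simp add: power2_eq_square)
  qed
  have N1: "k^2 \<ge> 1" using k1 by simp
  obtain \<theta> :: 'a where th: "norm \<theta> = 1"
    and thU: "\<forall>u\<in>U. \<bar>\<theta> \<bullet> u\<bar> \<ge> 1 / (real (k^2) * sqrt (DIM('a)))"
    and thW: "\<forall>w\<in>W. \<theta> \<bullet> w \<noteq> 0"
    using dir_exists[OF fU fW Uu W0 cU N1] by blast
  define t where "t = 1 / (real (k^2) * sqrt (DIM('a)))"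
  have t: "t > 0" using k1 by (simp add: t_def)
  have inj1: "inj_on (\<lambda>x. \<theta> \<bullet> x) S"
  proof (rule inj_onI, rule ccontr)
    fix x y assume xy: "x \<in> S" "y \<in> S" "\<theta> \<bullet> x = \<theta> \<bullet> y" "x \<noteq> y"
    then have "x - y \<in> W" unfolding W_def by (intro image_eqI[of _ _ "(x, y)"]) auto
    then have "\<theta> \<bullet> (x - y) \<noteq> 0" using thW by blast
    then show False using xy(3) by (simp add: inner_diff_right)
  qed
  have inj2: "inj_on (\<lambda>x. \<theta> \<bullet> x) S'"
  proof (rule inj_onI, rule ccontr)
    fix x y assume xy: "x \<in> S'" "y \<in> S'" "\<theta> \<bullet> x = \<theta> \<bullet> y" "x \<noteq> y"
    then have "x - y \<in> W" unfolding W_def by (intro image_eqI[of _ _ "(x, y)"]) auto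
    then have "\<theta> \<bullet> (x - y) \<noteq> 0" using thW by blast
    then show False using xy(3) by (simp add: inner_diff_right)
  qed
  have sep: "t * norm (x - y) \<le> \<bar>\<theta> \<bullet> (x - y)\<bar>" if xy: "x \<in> S" "y \<in> S'" for x y
  proof (cases "x = y")
    case True then show ?thesis by simp
  next
    case False
    define u where "u = (1 / norm (x - y)) *\<^sub>R (x - y)"
    have uU: "u \<in> U" unfolding U_def u_def P_def using xy False
      by (intro image_eqI[of _ _ "(x, y)"]) auto
    have "x - y = norm (x - y) *\<^sub>R u" using False by (simp add: u_def)
    then have "\<theta> \<bullet> (x - y) = norm (x - y) * (\<theta> \<bullet> u)" by (metis inner_scaleR_right)
    then have "\<bar>\<theta> \<bullet> (x - y)\<bar> = norm (x - y) * \<bar>\<theta> \<bullet> u\<bar>" by (simp add: abs_mult)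
    moreover have "t \<le> \<bar>\<theta> \<bullet> u\<bar>" using thU uU by (simp add: t_def)
    moreover have "t * norm (x - y) \<le> \<bar>\<theta> \<bullet> u\<bar> * norm (x - y)"
      using \<open>t \<le> \<bar>\<theta> \<bullet> u\<bar>\<close> by (intro mult_right_mono) auto
    ultimately show ?thesis by (simp add: mult.commute)
  qed
  have "t * W1 \<Gamma> \<Gamma>' \<le> W1 (proj \<theta> \<Gamma>) (proj \<theta> \<Gamma>')"
    using fS(1) fS'(1) t inj1 inj2 sep unfolding S_def S'_def by (intro W1_lift) auto
  also have "\<dots> \<le> D" unfolding D_def
    using th by (intro cSUP_upper[OF _ bdd]) auto
  finally have tW: "t * W1 \<Gamma> \<Gamma>' \<le> D" .
  have "W1 \<Gamma> \<Gamma>' = (real k)^2 * sqrt (real DIM('a)) * (t * W1 \<Gamma> \<Gamma>')"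
    using k1 by (simp add: t_def)
  also have "\<dots> \<le> (real k)^2 * sqrt (real DIM('a)) * D"
    using tW by (intro mult_left_mono) auto
  finally show ?thesis using first unfolding D_def by blast
qed


end
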